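(* Let $\pi\sim M(\phi,\sigma)$ be a ranking of $[m]$ drawn from the Mallows model, and let $1\le\tau\le m$. Then for all $s\le m$, the probability that none of the top $s$ items of the reference ranking $\sigma$ appears among the top $\tau$ positions of $\pi$ satisfies $$\Pr\big(\text{each of the items ranked }1,\dots,s\text{ in }\sigma\text{ is ranked below position }\tau\text{ in }\pi\big)\le\begin{cases}\phi^{\tau s}(1-\phi^{m-\tau})^s/(1-\phi^m)^s&\text{if }\phi<1,\\ (1-\tau/m)^s&\text{if }\phi=1.\end{cases}$$
   Context: The Mallows model $M(\phi,\sigma)$ on rankings of $[m]$, with reference ranking $\sigma$ and dispersion parameter $\phi\in[0,1]$, assigns to a ranking $\pi$ probability $\phi^{d(\pi,\sigma)}/Z(\phi)$, where $d$ is the Kendall-tau distance (the number of pairs of items ordered differently by the two rankings) and $Z(\phi)=\prod_{j=1}^{m}(1+\phi+\dots+\phi^{j-1})$ is the normalizing constant. *)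

theory Defs
  imports "HOL-Combinatorics.Permutations" Complex_Main
begin

text \<open>Items and positions are both {1..m}. A ranking is a bijection rk on {1..m}
  (rk i = position of item i, 1 = top), represented as a permutation of {1..m}.\<close>

definition rankings :: "nat \<Rightarrow> (nat \<Rightarrow> nat) set" where
  "rankings m = {rk. rk permutes {1..m}}"

definition kendall_tau :: "nat \<Rightarrow> (nat \<Rightarrow> nat) \<Rightarrow> (nat \<Rightarrow> nat) \<Rightarrow> nat" where
  "kendall_tau m rk sigma =
     card {(i, j). i \<in> {1..m} \<and> j \<in> {1..m} \<and> i < j \<and>
                   ((rk i < rk j) \<noteq> (sigma i < sigma j))}"

definition mallows_Z :: "nat \<Rightarrow> real \<Rightarrow> real" where
  "mallows_Z m phi = (\<Prod>j = 1..m. \<Sum>k < j. phi ^ k)"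

definition mallows_pr :: "nat \<Rightarrow> real \<Rightarrow> (nat \<Rightarrow> nat) \<Rightarrow> (nat \<Rightarrow> nat) \<Rightarrow> real" where
  "mallows_pr m phi sigma rk = phi ^ kendall_tau m rk sigma / mallows_Z m phi"

definition mallows_prob :: "nat \<Rightarrow> real \<Rightarrow> (nat \<Rightarrow> nat) \<Rightarrow> (nat \<Rightarrow> nat) set \<Rightarrow> real" where
  "mallows_prob m phi sigma A = (\<Sum>rk \<in> rankings m \<inter> A. mallows_pr m phi sigma rk)"

end

theory Submission
  imports Defs "HOL-Combinatorics.Multiset_Permutations"
begin


definition qn :: "real \<Rightarrow> nat \<Rightarrow> real" where
  "qn p k = (\<Sum>i<k. p ^ i)"

lemma qn_Suc: "qn p (Suc k) = qn p k + p ^ k"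
  by (simp add: qn_def)

lemma qn_nonneg: "0 \<le> p \<Longrightarrow> 0 \<le> qn p k"
  by (simp add: qn_def sum_nonneg)

lemma qn_ge1: "0 \<le> p \<Longrightarrow> 1 \<le> k \<Longrightarrow> 1 \<le> qn p k"
proof (induction k)
  case 0 then show ?case by simp
next
  case (Suc k) then show ?case
    by (cases "k = 0") (auto simp: qn_Suc qn_def add_increasing2)
qed

lemma qn_add: "qn p (s + d) = qn p s + p ^ s * qn p d"
  by (induction d) (simp_all add: qn_def power_add algebra_simps)

lemma qn_diff: "s \<le> n \<Longrightarrow> qn p n - qn p s = p ^ s * qn p (n - s)"
  using qn_add[of p s "n - s"] by simp

lemma qn_swap:
  assumes "0 \<le> p" "p \<le> 1" "k \<le> n"
  shows "qn p k * qn p (Suc n) \<le> qn p (Suc k) * qn p n"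
proof -
  have "qn p k * p ^ n = (\<Sum>i<k. p ^ (i + n))"
    by (simp add: qn_def sum_distrib_right power_add)
  also have "\<dots> \<le> (\<Sum>i<k. p ^ (i + k))"
    by (rule sum_mono) (simp add: power_decreasing assms)
  also have "\<dots> \<le> (\<Sum>i<n. p ^ (i + k))"
    by (rule sum_mono2) (auto simp: assms)
  also have "\<dots> = p ^ k * qn p n"
    by (simp add: qn_def sum_distrib_left power_add mult.commute)
  finally have "qn p k * p ^ n \<le> p ^ k * qn p n" .
  then show ?thesis by (simp add: qn_Suc algebra_simps)
qed

lemma qn_pow:
  assumes "0 \<le> p" "p \<le> 1" "Suc t \<le> n"
  shows "qn p (n - Suc t) * qn p n ^ t \<le> qn p (n - 1) ^ Suc t"
  using assms(3)
proof (induction t)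
  case 0 then show ?case by simp
next
  case (Suc t)
  have IH: "qn p (n - Suc t) * qn p n ^ t \<le> qn p (n - 1) ^ Suc t" using Suc by simp
  have sw: "qn p (n - Suc (Suc t)) * qn p (Suc (n - 1)) \<le> qn p (Suc (n - Suc (Suc t))) * qn p (n - 1)"
    by (rule qn_swap) (use assms Suc in auto)
  have e1: "Suc (n - 1) = n" "Suc (n - Suc (Suc t)) = n - Suc t" using Suc by auto
  have "qn p (n - Suc (Suc t)) * qn p n ^ Suc t = (qn p (n - Suc (Suc t)) * qn p n) * qn p n ^ t"
    by (simp add: algebra_simps)
  also have "\<dots> \<le> (qn p (n - Suc t) * qn p (n - 1)) * qn p n ^ t"
    using sw e1 by (intro mult_right_mono) (auto simp: qn_nonneg assms)
  also have "\<dots> = qn p (n - 1) * (qn p (n - Suc t) * qn p n ^ t)" by (simp add: algebra_simps)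
  also have "\<dots> \<le> qn p (n - 1) * qn p (n - 1) ^ Suc t"
    by (intro mult_left_mono IH) (simp add: qn_nonneg assms)
  finally show ?case by simp
qed

lemma step_ineq:
  assumes "0 \<le> p" "p \<le> 1" "Suc tau \<le> n" "s \<le> n" "0 \<le> A"
  shows "(qn p n - qn p s) * (p ^ tau * A / qn p (n - 1)) ^ s
         \<le> (p ^ Suc tau * A / qn p n) ^ s * qn p n"
proof (cases "s = 0")
  case True then show ?thesis by (simp add: qn_def)
next
  case False
  then obtain t where t: "s = Suc t" by (cases s) auto
  have qnpos: "qn p n > 0" using qn_ge1[of p n] assms by simp
  show ?thesis
  proof (cases "n = 1")
    case True
    then have "qn p (n - 1) = 0" by (simp add: qn_def)
    then show ?thesis using t qnpos assms by (simp add: zero_le_mult_iff qn_nonneg)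
  next
    case False
    then have q1pos: "qn p (n - 1) > 0" using qn_ge1[of p "n - 1"] assms by fastforce
    have key: "qn p (n - s) * qn p n ^ t \<le> qn p (n - 1) ^ s"
      using qn_pow[of p t n] assms t by simp
    have "(qn p n - qn p s) * (p ^ tau * A / qn p (n - 1)) ^ s
        = p ^ s * (p ^ tau * A) ^ s * (qn p (n - s) / qn p (n - 1) ^ s)"
      using assms by (simp add: qn_diff power_divide)
    also have "\<dots> \<le> p ^ s * (p ^ tau * A) ^ s * (1 / qn p n ^ t)"
    proof (intro mult_left_mono)
      show "qn p (n - s) / qn p (n - 1) ^ s \<le> 1 / qn p n ^ t"
        using key q1pos qnpos by (simp add: divide_simps mult.commute)
    qed (use assms in auto)
    also have "\<dots> = (p ^ Suc tau * A / qn p n) ^ s * qn p n"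
      using qnpos t by (simp add: power_divide power_mult_distrib field_simps)
    finally show ?thesis .
  qed
qed




fun linv :: "nat list \<Rightarrow> nat" where
  "linv [] = 0"
| "linv (x # xs) = card {y \<in> set xs. y < x} + linv xs"

definition rnk :: "nat set \<Rightarrow> nat \<Rightarrow> nat" where
  "rnk S x = card {y \<in> S. y < x}"

lemma sum_perms:
  assumes "finite S" "S \<noteq> {}"
  shows "(\<Sum>xs\<in>permutations_of_set S. f xs) = (\<Sum>x\<in>S. \<Sum>ys\<in>permutations_of_set (S - {x}). f (x # ys))"
proof -
  have "(\<Sum>xs\<in>permutations_of_set S. f xs) = (\<Sum>xs\<in>(\<Union>x\<in>S. (\<lambda>xs. x # xs) ` permutations_of_set (S - {x})). f xs)"
    by (rule arg_cong[where f="sum f", OF permutations_of_set_nonempty[OF assms(2)]])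
  also have "\<dots> = (\<Sum>x\<in>S. \<Sum>xs\<in>(\<lambda>xs. x # xs) ` permutations_of_set (S - {x}). f xs)"
  proof (rule sum.UNION_disjoint)
    show "finite S" by (rule assms(1))
    show "\<forall>x\<in>S. finite ((#) x ` permutations_of_set (S - {x}))" by simp
    show "\<forall>x\<in>S. \<forall>y\<in>S. x \<noteq> y \<longrightarrow> (#) x ` permutations_of_set (S - {x}) \<inter> (#) y ` permutations_of_set (S - {y}) = {}"
      by blast
  qed
  also have "\<dots> = (\<Sum>x\<in>S. \<Sum>ys\<in>permutations_of_set (S - {x}). f (x # ys))"
  proof (rule sum.cong[OF refl])
    fix x
    show "(\<Sum>xs\<in>(#) x ` permutations_of_set (S - {x}). f xs) = (\<Sum>ys\<in>permutations_of_set (S - {x}). f (x # ys))"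
      by (subst sum.reindex) (auto simp: inj_on_def)
  qed
  finally show ?thesis .
qed

lemma rank_sum:
  "finite S \<Longrightarrow> (\<Sum>x\<in>S. p ^ rnk S x) = qn p (card S)"
proof (induction "card S" arbitrary: S)
  case 0 then show ?case by (simp add: qn_def)
next
  case (Suc n)
  have fS: "finite S" by (rule Suc.prems)
  have ne: "S \<noteq> {}" using Suc.hyps(2) by auto
  define M where "M = Max S"
  define S' where "S' = S - {M}"
  have MS: "M \<in> S" unfolding M_def by (rule Max_in[OF fS ne])
  have S1: "S = insert M S'" unfolding S'_def using MS by blast
  have S2: "M \<notin> S'" unfolding S'_def by blast
  have S3: "finite S'" unfolding S'_def using fS by blast
  have cS': "card S' = n" unfolding S'_def using MS fS Suc.hyps(2) by simp
  have le: "y \<le> M" if "y \<in> S" for y unfolding M_def using fS that by simp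
  have r1: "rnk S x = rnk S' x" if "x \<in> S'" for x
  proof -
    have "x \<le> M" using that le unfolding S'_def by blast
    then have "{y \<in> S. y < x} = {y \<in> S'. y < x}" unfolding S'_def by auto
    then show ?thesis by (simp add: rnk_def)
  qed
  have r2: "rnk S M = n"
  proof -
    have "{y \<in> S. y < M} = S'" unfolding S'_def using le by fastforce
    then show ?thesis using cS' by (simp add: rnk_def)
  qed
  have "(\<Sum>x\<in>S. p ^ rnk S x) = p ^ rnk S M + (\<Sum>x\<in>S'. p ^ rnk S x)"
    by (subst S1) (rule sum.insert[OF S3 S2])
  also have "\<dots> = p ^ n + (\<Sum>x\<in>S'. p ^ rnk S' x)" using r1 r2 by simp
  also have "\<dots> = qn p (Suc n)" using Suc.hyps(1)[of S'] cS' S3 by (simp add: qn_Suc)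
  finally show ?case using Suc.hyps(2) by simp
qed

lemma linv_cons:
  assumes "x \<in> S" "ys \<in> permutations_of_set (S - {x})"
  shows "linv (x # ys) = rnk S x + linv ys"
proof -
  have "set ys = S - {x}" using assms by (simp add: permutations_of_set_def)
  then have "{y \<in> set ys. y < x} = {y \<in> S. y < x}" by auto
  then show ?thesis by (simp add: rnk_def)
qed

definition G :: "real \<Rightarrow> nat set \<Rightarrow> real" where
  "G p S = (\<Sum>xs\<in>permutations_of_set S. p ^ linv xs)"

lemma G_formula:
  "finite S \<Longrightarrow> G p S = (\<Prod>j = 1..card S. qn p j)"
proof (induction "card S" arbitrary: S)
  case 0 then show ?case by (simp add: G_def)
next
  case (Suc n)
  then have ne: "S \<noteq> {}" by auto
  have "G p S = (\<Sum>x\<in>S. \<Sum>ys\<in>permutations_of_set (S - {x}). p ^ linv (x # ys))"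
    unfolding G_def by (rule sum_perms[OF Suc.prems ne])
  also have "\<dots> = (\<Sum>x\<in>S. p ^ rnk S x * G p (S - {x}))"
  proof (rule sum.cong[OF refl])
    fix x assume xS: "x \<in> S"
    have "(\<Sum>ys\<in>permutations_of_set (S - {x}). p ^ linv (x # ys)) = (\<Sum>ys\<in>permutations_of_set (S - {x}). p ^ rnk S x * p ^ linv ys)"
      by (rule sum.cong[OF refl]) (simp only: linv_cons[OF xS] power_add)
    then show "(\<Sum>ys\<in>permutations_of_set (S - {x}). p ^ linv (x # ys)) = p ^ rnk S x * G p (S - {x})"
      by (simp add: G_def sum_distrib_left del: linv.simps)
  qed
  also have "\<dots> = (\<Sum>x\<in>S. p ^ rnk S x * (\<Prod>j = 1..n. qn p j))"
  proof (rule sum.cong[OF refl])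
    fix x assume "x \<in> S"
    then have "card (S - {x}) = n" "finite (S - {x})" using Suc.hyps(2) Suc.prems by auto
    then show "p ^ rnk S x * G p (S - {x}) = p ^ rnk S x * (\<Prod>j = 1..n. qn p j)"
      using Suc.hyps(1)[of "S - {x}"] by simp
  qed
  also have "\<dots> = qn p (Suc n) * (\<Prod>j = 1..n. qn p j)"
    using rank_sum[of S p] Suc by (simp flip: sum_distrib_right)
  also have "\<dots> = (\<Prod>j = 1..Suc n. qn p j)"
    by (simp add: prod.nat_ivl_Suc')
  finally show ?case using Suc by simp
qed

lemma G_pos: "finite S \<Longrightarrow> 0 \<le> p \<Longrightarrow> 0 < G p S"
  unfolding G_formula by (rule prod_pos) (use qn_ge1[of p] in fastforce)

definition H :: "real \<Rightarrow> nat set \<Rightarrow> nat \<Rightarrow> nat set \<Rightarrow> real" where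
  "H p T tau S = (\<Sum>xs\<in>permutations_of_set S. if set (take tau xs) \<inter> T = {} then p ^ linv xs else 0)"

lemma H_main:
  assumes "0 \<le> p" "p \<le> 1"
  shows "finite S \<Longrightarrow> T \<subseteq> S \<Longrightarrow> (\<forall>t\<in>T. \<forall>x\<in>S - T. t < x) \<Longrightarrow> tau \<le> card S \<Longrightarrow>
    H p T tau S \<le> (p ^ tau * qn p (card S - tau) / qn p (card S)) ^ card T * G p S"
proof (induction tau arbitrary: S)
  case 0
  have "(qn p (card S) / qn p (card S)) ^ card T = 1"
  proof (cases "card S = 0")
    case True then have "T = {}" using 0 by (metis card_0_eq finite_subset subset_empty)
    then show ?thesis by simp
  next
    case False then show ?thesis using qn_ge1[of p "card S"] assms by simp
  qed
  then show ?case by (simp add: H_def G_def)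
next
  case (Suc tau)
  define n where "n = card S"
  define s where "s = card T"
  note P = Suc.prems
  have n1: "1 \<le> n" using P(4) by (simp add: n_def)
  have ne: "S \<noteq> {}" using n1 unfolding n_def by auto
  define B where "B = (p ^ tau * qn p (n - 1 - tau) / qn p (n - 1)) ^ s"
  define Gn where "Gn = (\<Prod>j = 1..n - 1. qn p j)"
  have B0: "0 \<le> B" using assms by (simp add: B_def qn_nonneg)
  have IH: "H p T tau (S - {x}) \<le> B * Gn" if "x \<in> S - T" for x
  proof -
    have "H p T tau (S - {x}) \<le> (p ^ tau * qn p (card (S - {x}) - tau) / qn p (card (S - {x}))) ^ card T * G p (S - {x})"
      by (rule Suc.IH) (use P that in auto)
    also have "\<dots> = B * Gn" using P that
      by (simp add: B_def Gn_def G_formula n_def s_def)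
    finally show ?thesis .
  qed
  have "H p T (Suc tau) S = (\<Sum>x\<in>S. \<Sum>ys\<in>permutations_of_set (S - {x}).
      if set (take (Suc tau) (x # ys)) \<inter> T = {} then p ^ linv (x # ys) else 0)"
    unfolding H_def by (rule sum_perms[OF Suc.prems(1) ne])
  also have "\<dots> = (\<Sum>x\<in>S. if x \<in> T then 0 else p ^ rnk S x * H p T tau (S - {x}))"
  proof (rule sum.cong[OF refl])
    fix x assume xS: "x \<in> S"
    show "(\<Sum>ys\<in>permutations_of_set (S - {x}).
      if set (take (Suc tau) (x # ys)) \<inter> T = {} then p ^ linv (x # ys) else 0)
      = (if x \<in> T then 0 else p ^ rnk S x * H p T tau (S - {x}))"
    proof (cases "x \<in> T")
      case True then show ?thesis by (intro trans[OF sum.neutral]) auto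
    next
      case False
      have "(\<Sum>ys\<in>permutations_of_set (S - {x}).
        if set (take (Suc tau) (x # ys)) \<inter> T = {} then p ^ linv (x # ys) else 0)
        = (\<Sum>ys\<in>permutations_of_set (S - {x}). p ^ rnk S x *
             (if set (take tau ys) \<inter> T = {} then p ^ linv ys else 0))"
        by (rule sum.cong[OF refl]) (use False xS in \<open>simp add: linv_cons power_add del: linv.simps\<close>)
      then show ?thesis using False by (simp add: H_def sum_distrib_left)
    qed
  qed
  also have "\<dots> \<le> (\<Sum>x\<in>S. if x \<in> T then 0 else p ^ rnk S x * (B * Gn))"
    by (rule sum_mono) (use IH in \<open>auto intro!: mult_left_mono simp: assms\<close>)
  also have "\<dots> = (\<Sum>x\<in>S - T. p ^ rnk S x) * (B * Gn)"
    using P(1) by (simp add: sum.If_cases sum_distrib_right Diff_eq)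
  also have "(\<Sum>x\<in>S - T. p ^ rnk S x) = qn p n - qn p s"
  proof -
    have fT: "finite T" using P(1,2) finite_subset by blast
    have rT: "rnk S x = rnk T x" if "x \<in> T" for x
    proof -
      have "{y \<in> S. y < x} = {y \<in> T. y < x}"
      proof -
        have "y \<in> T" if "y \<in> S" "y < x" for y
        proof (rule ccontr)
          assume "y \<notin> T" then have "x < y" using P(3) \<open>x \<in> T\<close> \<open>y \<in> S\<close> by blast
          then show False using \<open>y < x\<close> by simp
        qed
        then show ?thesis using P(2) by blast
      qed
      then show ?thesis by (simp add: rnk_def)
    qed
    have "(\<Sum>x\<in>S - T. p ^ rnk S x) = (\<Sum>x\<in>S. p ^ rnk S x) - (\<Sum>x\<in>T. p ^ rnk S x)"
      using P(1,2) by (simp add: sum_diff)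
    also have "(\<Sum>x\<in>T. p ^ rnk S x) = (\<Sum>x\<in>T. p ^ rnk T x)" using rT by simp
    finally show ?thesis using rank_sum[of S p] rank_sum[of T p] fT P(1)
      by (simp add: n_def s_def)
  qed
  also have "(qn p n - qn p s) * (B * Gn) = ((qn p n - qn p s) * B) * Gn" by simp
  also have "\<dots> \<le> ((p ^ Suc tau * qn p (n - Suc tau) / qn p n) ^ s * qn p n) * Gn"
  proof (rule mult_right_mono)
    have sn: "s \<le> n" using P(1,2) by (simp add: s_def n_def card_mono)
    have "n - 1 - tau = n - Suc tau" by simp
    then show "(qn p n - qn p s) * B \<le> (p ^ Suc tau * qn p (n - Suc tau) / qn p n) ^ s * qn p n"
      unfolding B_def using step_ineq[of p tau n s "qn p (n - Suc tau)"] assms P(4) sn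
      by (simp add: n_def qn_nonneg)
    show "0 \<le> Gn" using assms by (simp add: Gn_def prod_nonneg qn_nonneg)
  qed
  also have "\<dots> = (p ^ Suc tau * qn p (card S - Suc tau) / qn p (card S)) ^ card T * G p S"
  proof -
    have "qn p n * Gn = G p S"
    proof -
      obtain k where k: "n = Suc k" using n1 by (cases n) auto
      show ?thesis using Suc.prems(1) unfolding G_formula[OF Suc.prems(1)] Gn_def
        by (simp add: k flip: n_def)
    qed
    then show ?thesis by (simp add: n_def s_def)
  qed
  finally show ?case .
qed




definition posinv :: "nat list \<Rightarrow> (nat \<times> nat) set" where
  "posinv xs = {(i, j). i < j \<and> j < length xs \<and> xs ! j < xs ! i}"

lemma posinv_Cons:
  "posinv (x # xs) = (\<lambda>j. (0, Suc j)) ` {j. j < length xs \<and> xs ! j < x}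
     \<union> (\<lambda>(i, j). (Suc i, Suc j)) ` posinv xs"
proof (intro equalityI subsetI)
  fix z assume z: "z \<in> posinv (x # xs)"
  obtain i j where ij: "z = (i, j)" by (cases z)
  from z ij have h: "i < j" "j < Suc (length xs)" "(x # xs) ! j < (x # xs) ! i" by (auto simp: posinv_def)
  obtain j' where j': "j = Suc j'" using h by (cases j) auto
  show "z \<in> (\<lambda>j. (0, Suc j)) ` {j. j < length xs \<and> xs ! j < x} \<union> (\<lambda>(i, j). (Suc i, Suc j)) ` posinv xs"
  proof (cases i)
    case 0 then show ?thesis using h ij j' by auto
  next
    case (Suc i')
    then have "(i', j') \<in> posinv xs" using h j' by (auto simp: posinv_def)
    then show ?thesis using ij Suc j' by force
  qed
next
  fix z assume "z \<in> (\<lambda>j. (0, Suc j)) ` {j. j < length xs \<and> xs ! j < x} \<union> (\<lambda>(i, j). (Suc i, Suc j)) ` posinv xs"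
  then show "z \<in> posinv (x # xs)" by (auto simp: posinv_def)
qed

lemma finite_posinv: "finite (posinv xs)"
proof -
  have "posinv xs \<subseteq> {..<length xs} \<times> {..<length xs}" by (auto simp: posinv_def)
  then show ?thesis by (rule finite_subset) simp
qed

lemma linv_posinv: "distinct xs \<Longrightarrow> linv xs = card (posinv xs)"
proof (induction xs)
  case Nil then show ?case by (simp add: posinv_def)
next
  case (Cons x xs)
  have d: "distinct xs" using Cons by simp
  have c1: "card {y \<in> set xs. y < x} = card {j. j < length xs \<and> xs ! j < x}"
  proof -
    have "{y \<in> set xs. y < x} = (!) xs ` {j. j < length xs \<and> xs ! j < x}"
      by (auto simp: in_set_conv_nth)
    moreover have "inj_on ((!) xs) {j. j < length xs \<and> xs ! j < x}"
      using d by (intro inj_on_nth) auto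
    ultimately show ?thesis by (simp add: card_image)
  qed
  have "card (posinv (x # xs)) = card ((\<lambda>j. (0::nat, Suc j)) ` {j. j < length xs \<and> xs ! j < x})
     + card ((\<lambda>(i, j). (Suc i, Suc j)) ` posinv xs)"
    unfolding posinv_Cons
    by (rule card_Un_disjoint) (auto simp: finite_posinv)
  also have "\<dots> = card {j. j < length xs \<and> xs ! j < x} + card (posinv xs)"
    by (subst card_image, simp add: inj_on_def)+ (auto simp: inj_on_def)
  finally show ?case using Cons d c1 by simp
qed




definition Lst :: "nat \<Rightarrow> (nat \<Rightarrow> nat) \<Rightarrow> (nat \<Rightarrow> nat) \<Rightarrow> nat list" where
  "Lst m sigma rk = map (\<lambda>p. sigma (inv rk p)) [1..<Suc m]"

lemma Lst_length: "length (Lst m sigma rk) = m"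
  by (simp add: Lst_def)

lemma Lst_nth: "i < m \<Longrightarrow> Lst m sigma rk ! i = sigma (inv rk (Suc i))"
  by (simp add: Lst_def nth_append del: upt_Suc)

lemma Lst_perm:
  assumes s: "sigma permutes {1..m}" and r: "rk permutes {1..m}"
  shows "Lst m sigma rk \<in> permutations_of_set {1..m}"
proof
  have ri: "inv rk permutes {1..m}" using r by (rule permutes_inv)
  have "set (Lst m sigma rk) = (\<lambda>p. sigma (inv rk p)) ` {1..m}"
    unfolding Lst_def set_map set_upt atLeastLessThanSuc_atLeastAtMost ..
  also have "\<dots> = sigma ` (inv rk ` {1..m})" by (simp only: image_image)
  also have "\<dots> = {1..m}" using permutes_image[OF ri] permutes_image[OF s] by simp
  finally show "set (Lst m sigma rk) = {1..m}" .
  have "inj (\<lambda>p. sigma (inv rk p))"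
    using inj_compose[OF permutes_inj[OF s] permutes_inj[OF ri]] by (simp add: comp_def)
  then have "inj_on (\<lambda>p. sigma (inv rk p)) (set [1..<Suc m])" by (rule inj_on_subset) simp
  then show "distinct (Lst m sigma rk)" unfolding Lst_def distinct_map by simp
qed

lemma kendall_eq:
  assumes s: "sigma permutes {1..m}" and r: "rk permutes {1..m}"
  shows "kendall_tau m rk sigma = card (posinv (Lst m sigma rk))"
proof -
  define D where "D = {(a, b). a \<in> {1..m} \<and> b \<in> {1..m} \<and> rk a < rk b \<and> sigma b < sigma a}"
  have rin: "rk a \<in> {1..m} \<longleftrightarrow> a \<in> {1..m}" for a using permutes_in_image[OF r] .
  have sin: "sigma a \<in> {1..m} \<longleftrightarrow> a \<in> {1..m}" for a using permutes_in_image[OF s] .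
  have ri: "inv rk permutes {1..m}" using r by (rule permutes_inv)
  have riin: "inv rk a \<in> {1..m} \<longleftrightarrow> a \<in> {1..m}" for a using permutes_in_image[OF ri] .
  have rinv1: "rk (inv rk x) = x" for x using permutes_inverses(1)[OF r] .
  have rinv2: "inv rk (rk x) = x" for x using permutes_inverses(2)[OF r] .
  have rinj: "rk a = rk b \<longleftrightarrow> a = b" for a b using permutes_inj[OF r] by (auto simp: inj_def)
  have sinj: "sigma a = sigma b \<longleftrightarrow> a = b" for a b using permutes_inj[OF s] by (auto simp: inj_def)
  define K where "K = {(i, j). i \<in> {1..m} \<and> j \<in> {1..m} \<and> i < j \<and> ((rk i < rk j) \<noteq> (sigma i < sigma j))}"
  have k1: "kendall_tau m rk sigma = card K" by (simp add: kendall_tau_def K_def)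
  have fD: "finite D" by (rule finite_subset[of _ "{1..m} \<times> {1..m}"]) (auto simp: D_def)
  have K_img: "K = (\<lambda>(a, b). (min a b, max a b)) ` D"
  proof (intro equalityI subsetI)
    fix z assume z: "z \<in> K"
    then obtain i j where ij: "z = (i, j)" "i \<in> {1..m}" "j \<in> {1..m}" "i < j"
      "(rk i < rk j) \<noteq> (sigma i < sigma j)" by (auto simp: K_def)
    have ne1: "rk i \<noteq> rk j" "sigma i \<noteq> sigma j" using ij rinj sinj by auto
    show "z \<in> (\<lambda>(a, b). (min a b, max a b)) ` D"
    proof (cases "rk i < rk j")
      case True
      then have "(i, j) \<in> D" using ij ne1 by (auto simp: D_def)
      then show ?thesis using ij by (auto intro!: image_eqI[of _ _ "(i, j)"])
    next
      case False
      then have "(j, i) \<in> D" using ij ne1 by (auto simp: D_def)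
      then show ?thesis using ij by (auto intro!: image_eqI[of _ _ "(j, i)"])
    qed
  next
    fix z assume "z \<in> (\<lambda>(a, b). (min a b, max a b)) ` D"
    then obtain a b where ab: "z = (min a b, max a b)" "a \<in> {1..m}" "b \<in> {1..m}" "rk a < rk b" "sigma b < sigma a"
      by (auto simp: D_def)
    then have "a \<noteq> b" by auto
    then show "z \<in> K" using ab by (cases "a < b") (auto simp: K_def min_def max_def)
  qed
  have K_inj: "inj_on (\<lambda>(a, b). (min a b, max a b)) D"
  proof (rule inj_onI)
    fix x y assume x: "x \<in> D" and y: "y \<in> D" and e: "(\<lambda>(a, b). (min a b, max a b)) x = (\<lambda>(a, b). (min a b, max a b)) y"
    obtain a b where "x = (a, b)" by (cases x)
    moreover obtain c d where "y = (c, d)" by (cases y)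
    ultimately show "x = y" using x y e by (auto simp: D_def min_def max_def split: if_splits)
  qed
  have cK: "card K = card D" using K_img K_inj by (simp add: card_image)
  have P_img: "posinv (Lst m sigma rk) = (\<lambda>(a, b). (rk a - 1, rk b - 1)) ` D"
  proof (intro equalityI subsetI)
    fix z assume z: "z \<in> posinv (Lst m sigma rk)"
    then obtain i j where ij: "z = (i, j)" "i < j" "j < m"
       "sigma (inv rk (Suc j)) < sigma (inv rk (Suc i))"
      by (auto simp: posinv_def Lst_length Lst_nth)
    define a where "a = inv rk (Suc i)"
    define b where "b = inv rk (Suc j)"
    have "(a, b) \<in> D" using ij riin rinv1 by (auto simp: D_def a_def b_def)
    moreover have "z = (rk a - 1, rk b - 1)" using ij rinv1 by (simp add: a_def b_def)
    ultimately show "z \<in> (\<lambda>(a, b). (rk a - 1, rk b - 1)) ` D" by force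
  next
    fix z assume "z \<in> (\<lambda>(a, b). (rk a - 1, rk b - 1)) ` D"
    then obtain a b where ab: "z = (rk a - 1, rk b - 1)" "a \<in> {1..m}" "b \<in> {1..m}" "rk a < rk b" "sigma b < sigma a"
      by (auto simp: D_def)
    have ra: "rk a \<in> {1..m}" "rk b \<in> {1..m}" using ab rin by auto
    then have "Suc (rk a - 1) = rk a" "Suc (rk b - 1) = rk b" by auto
    then show "z \<in> posinv (Lst m sigma rk)" using ab ra
      by (auto simp: posinv_def Lst_length Lst_nth rinv2)
  qed
  have P_inj: "inj_on (\<lambda>(a, b). (rk a - 1, rk b - 1)) D"
  proof (rule inj_onI)
    fix x y assume x: "x \<in> D" and y: "y \<in> D" and e: "(\<lambda>(a, b). (rk a - 1, rk b - 1)) x = (\<lambda>(a, b). (rk a - 1, rk b - 1)) y"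
    obtain a b where xab: "x = (a, b)" by (cases x)
    obtain c d where ycd: "y = (c, d)" by (cases y)
    have "rk a \<in> {1..m}" "rk b \<in> {1..m}" "rk c \<in> {1..m}" "rk d \<in> {1..m}"
      using x y xab ycd rin by (auto simp: D_def)
    then have "rk a = rk c" "rk b = rk d" using e xab ycd by auto
    then show "x = y" using xab ycd rinj by auto
  qed
  have "card (posinv (Lst m sigma rk)) = card D" using P_img P_inj by (simp add: card_image)
  then show ?thesis using k1 cK by simp
qed



lemma event_eq:
  assumes s: "sigma permutes {1..m}" and r: "rk permutes {1..m}"
  shows "(\<forall>i \<in> {1..m}. sigma i \<le> s \<longrightarrow> rk i > tau) \<longleftrightarrow>
         set (take tau (Lst m sigma rk)) \<inter> {1..s} = {}"
proof -
  have rin: "rk a \<in> {1..m} \<longleftrightarrow> a \<in> {1..m}" for a using permutes_in_image[OF r] .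
  have sin: "sigma a \<in> {1..m} \<longleftrightarrow> a \<in> {1..m}" for a using permutes_in_image[OF s] .
  have ri: "inv rk permutes {1..m}" using r by (rule permutes_inv)
  have riin: "inv rk a \<in> {1..m} \<longleftrightarrow> a \<in> {1..m}" for a using permutes_in_image[OF ri] .
  have rinv1: "rk (inv rk x) = x" for x using permutes_inverses(1)[OF r] .
  have rinv2: "inv rk (rk x) = x" for x using permutes_inverses(2)[OF r] .
  have st: "set (take tau (Lst m sigma rk)) = {sigma (inv rk (Suc p)) | p. p < tau \<and> p < m}"
  proof -
    have st0: "set (take tau xs) = {xs ! p | p. p < tau \<and> p < length xs}" for xs :: "nat list"
      by (auto simp: set_conv_nth) (metis nth_take)
    show ?thesis unfolding st0 Lst_length
      by (rule Collect_cong) (metis Lst_nth)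
  qed
  show ?thesis
  proof
    assume A: "\<forall>i \<in> {1..m}. sigma i \<le> s \<longrightarrow> rk i > tau"
    have "\<not> sigma (inv rk (Suc p)) \<le> s" if "p < tau" "p < m" for p
      using A[rule_format, of "inv rk (Suc p)"] that riin rinv1 by auto
    then show "set (take tau (Lst m sigma rk)) \<inter> {1..s} = {}" unfolding st by auto
  next
    assume B: "set (take tau (Lst m sigma rk)) \<inter> {1..s} = {}"
    show "\<forall>i \<in> {1..m}. sigma i \<le> s \<longrightarrow> rk i > tau"
    proof (intro ballI impI)
      fix i assume i: "i \<in> {1..m}" "sigma i \<le> s"
      show "rk i > tau"
      proof (rule ccontr)
        assume "\<not> rk i > tau"
        then have "rk i - 1 < tau" "rk i - 1 < m" "Suc (rk i - 1) = rk i" using rin[of i] i by auto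
        then have "sigma i \<in> set (take tau (Lst m sigma rk))" unfolding st
          using rinv2 by (metis (mono_tags, lifting) mem_Collect_eq)
        moreover have "sigma i \<in> {1..s}"
        proof -
          have "sigma i \<in> {1..m}" using i(1) sin by blast
          then show ?thesis using i(2) by simp
        qed
        ultimately show False using B by blast
      qed
    qed
  qed
qed





lemma prob_as_H:
  assumes s: "sigma permutes {1..m}"
  shows "mallows_prob m phi sigma {rk. \<forall>i \<in> {1..m}. sigma i \<le> s \<longrightarrow> rk i > tau}
       = H phi {1..s} tau {1..m} / G phi {1..m}"
proof -
  let ?E = "{rk. \<forall>i \<in> {1..m}. sigma i \<le> s \<longrightarrow> rk i > tau}"
  let ?L = "Lst m sigma"
  have Z: "mallows_Z m phi = G phi {1..m}" by (simp add: G_formula mallows_Z_def qn_def[abs_def])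
  have inj: "inj_on ?L (rankings m)"
  proof (rule inj_onI)
    fix r1 r2 assume r1: "r1 \<in> rankings m" and r2: "r2 \<in> rankings m" and e: "?L r1 = ?L r2"
    have p1: "r1 permutes {1..m}" and p2: "r2 permutes {1..m}" using r1 r2 by (auto simp: rankings_def)
    have "inv r1 p = inv r2 p" for p
    proof (cases "p \<in> {1..m}")
      case True
      then have "p - 1 < m" "Suc (p - 1) = p" by auto
      then have "sigma (inv r1 p) = sigma (inv r2 p)" using e Lst_nth[of "p - 1" m sigma r1] Lst_nth[of "p - 1" m sigma r2]
        by metis
      then show ?thesis using permutes_inj[OF s] by (auto simp: inj_def)
    next
      case False
      then show ?thesis using permutes_inv[OF p1] permutes_inv[OF p2] by (simp add: permutes_not_in)
    qed
    then have "inv r1 = inv r2" by auto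
    then show "r1 = r2" using permutes_inv_inv[OF p1] permutes_inv_inv[OF p2] by metis
  qed
  have img: "?L ` rankings m = permutations_of_set {1..m}"
  proof (rule card_subset_eq)
    show "finite (permutations_of_set {1..m})" by simp
    show "?L ` rankings m \<subseteq> permutations_of_set {1..m}"
      using Lst_perm[OF s] by (auto simp: rankings_def)
    have "card (rankings m) = fact m"
      unfolding rankings_def by (rule card_permutations) auto
    then show "card (?L ` rankings m) = card (permutations_of_set {1..m})"
      using inj by (simp add: card_image)
  qed
  have "mallows_prob m phi sigma ?E
      = (\<Sum>rk\<in>rankings m. if rk \<in> ?E then phi ^ kendall_tau m rk sigma else 0) / G phi {1..m}"
  proof -
    have fin: "finite (rankings m)" unfolding rankings_def by (rule finite_permutations) simp
    have "mallows_prob m phi sigma ?E = (\<Sum>rk\<in>rankings m \<inter> ?E. phi ^ kendall_tau m rk sigma) / G phi {1..m}"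
      unfolding mallows_prob_def mallows_pr_def Z by (simp add: sum_divide_distrib[symmetric])
    also have "(\<Sum>rk\<in>rankings m \<inter> ?E. phi ^ kendall_tau m rk sigma) = (\<Sum>rk\<in>rankings m. if rk \<in> ?E then phi ^ kendall_tau m rk sigma else 0)"
      by (rule sum.inter_restrict[OF fin])
    finally show ?thesis .
  qed
  also have "(\<Sum>rk\<in>rankings m. if rk \<in> ?E then phi ^ kendall_tau m rk sigma else 0)
      = (\<Sum>rk\<in>rankings m. (\<lambda>xs. if set (take tau xs) \<inter> {1..s} = {} then phi ^ linv xs else 0) (?L rk))"
  proof (rule sum.cong[OF refl])
    fix rk assume "rk \<in> rankings m"
    then have r: "rk permutes {1..m}" by (simp add: rankings_def)
    have d: "distinct (?L rk)" using Lst_perm[OF s r] by (simp add: permutations_of_set_def)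
    show "(if rk \<in> ?E then phi ^ kendall_tau m rk sigma else 0)
      = (\<lambda>xs. if set (take tau xs) \<inter> {1..s} = {} then phi ^ linv xs else 0) (?L rk)"
      using event_eq[OF s r, of s tau] kendall_eq[OF s r] linv_posinv[OF d] by simp
  qed
  also have "\<dots> = H phi {1..s} tau {1..m}"
    unfolding H_def img[symmetric] by (simp add: sum.reindex[OF inj])
  finally show ?thesis .
qed

theorem lemma2:
  fixes m tau s :: nat and phi :: real and sigma :: "nat \<Rightarrow> nat"
  assumes "0 \<le> phi" and "phi \<le> 1"
    and "sigma \<in> rankings m"
    and "1 \<le> tau" and "tau \<le> m"
    and "s \<le> m"
  shows "mallows_prob m phi sigma {rk. \<forall>i \<in> {1..m}. sigma i \<le> s \<longrightarrow> rk i > tau}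
         \<le> (if phi < 1
             then phi ^ (tau * s) * (1 - phi ^ (m - tau)) ^ s / (1 - phi ^ m) ^ s
             else (1 - real tau / real m) ^ s)"
proof -
  have s: "sigma permutes {1..m}" using assms(3) by (simp add: rankings_def)
  have Gp: "0 < G phi {1..m}" using G_pos assms by simp
  have "H phi {1..s} tau {1..m} \<le> (phi ^ tau * qn phi (card {1..m} - tau) / qn phi (card {1..m})) ^ card {1..s} * G phi {1..m}"
    by (rule H_main) (use assms in auto)
  then have "H phi {1..s} tau {1..m} / G phi {1..m} \<le> (phi ^ tau * qn phi (m - tau) / qn phi m) ^ s"
    using Gp by (simp add: pos_divide_le_eq)
  also have "\<dots> = (if phi < 1
             then phi ^ (tau * s) * (1 - phi ^ (m - tau)) ^ s / (1 - phi ^ m) ^ s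
             else (1 - real tau / real m) ^ s)"
  proof (cases "phi < 1")
    case True
    then have ne: "phi \<noteq> 1" "1 - phi \<noteq> 0" by auto
    have q: "qn phi k = (1 - phi ^ k) / (1 - phi)" for k
      unfolding qn_def using sum_gp_strict[of phi k] ne by simp
    have aux: "c \<noteq> 0 \<Longrightarrow> (a * (b / c)) / (d / c) = a * b / d" for a b c d :: real
      by (cases "d = 0") (simp_all add: field_simps)
    have "phi ^ tau * qn phi (m - tau) / qn phi m = phi ^ tau * (1 - phi ^ (m - tau)) / (1 - phi ^ m)"
      unfolding q by (rule aux[OF ne(2)])
    then show ?thesis using True by (simp add: power_mult_distrib power_divide power_mult)
  next
    case False
    then have p1: "phi = 1" using assms by simp
    have "qn phi k = real k" for k unfolding qn_def p1 by simp
    moreover have "real (m - tau) / real m = 1 - real tau / real m"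
      using assms by (simp add: of_nat_diff field_simps)
    ultimately show ?thesis using p1 by simp
  qed
  finally show ?thesis using prob_as_H[OF s] by simp
qed


end
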